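(* Let $\Omega\subset\mathbb{C}^n$ be an open connected subset and $f_m\colon\Omega\to\mathbb{C}^n$ ($m\in\mathbb{N}$) holomorphic maps converging locally uniformly to $\mathrm{id}|_\Omega$. Let $D>0$ be an integer and $\Omega'\subset\Omega$ a non-empty open relatively compact subset such that $(f_m)^i(\overline{\Omega'})\subseteq\Omega$ for $i=1,\dots,D$ and all $m$, and $(f_m)^D=\mathrm{id}$ on $\Omega'$ for all $m$. Then for each $m\gg0$ there is a non-empty compact convex subset $B_m\subset\Omega'$ with $f_m(B_m)=B_m$. *)

theory Defs
  imports "HOL-Analysis.Analysis"
begin

definition complex_linear :: "(complex ^ 'n \<Rightarrow> complex ^ 'm) \<Rightarrow> bool" where
  "complex_linear L \<longleftrightarrow> linear L \<and> (\<forall>c v. L (c *s v) = c *s L v)"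

definition holo_on :: "(complex ^ 'n \<Rightarrow> complex ^ 'm) \<Rightarrow> (complex ^ 'n) set \<Rightarrow> bool" where
  "holo_on f S \<longleftrightarrow> (\<forall>z\<in>S. \<exists>L. complex_linear L \<and> (f has_derivative L) (at z))"

definition locally_uniform_limit ::
  "'a::metric_space set \<Rightarrow> (nat \<Rightarrow> 'a \<Rightarrow> 'b::metric_space) \<Rightarrow> ('a \<Rightarrow> 'b) \<Rightarrow> bool" where
  "locally_uniform_limit S f g \<longleftrightarrow>
     (\<forall>x\<in>S. \<exists>e>0. uniform_limit (S \<inter> cball x e) f g sequentially)"

end

theory Submission imports Defs "HOL-Complex_Analysis.Cauchy_Integral_Formula" begin

lemma norm_smult_cvec: "norm (c *s (v::complex^'n)) = norm c * norm v"
proof -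
  have "norm (c *s v) = L2_set (\<lambda>i. norm c * norm (v$i)) UNIV"
    by (simp add: norm_vec_def norm_mult)
  also have "\<dots> = norm c * norm v"
    by (simp add: norm_vec_def L2_set_right_distrib)
  finally show ?thesis .
qed

lemma norm_le_sum_cvec: "norm (v::complex^'n) \<le> (\<Sum>i\<in>UNIV. norm (v$i))"
  by (simp add: norm_vec_def L2_set_le_sum)

lemma bl_smult_line: "bounded_linear (\<lambda>t::complex. t *s (v::complex^'n))"
proof -
  have "linear (\<lambda>t::complex. t *s v)"
    by (rule linearI) (auto simp: vec_eq_iff algebra_simps)
  then show ?thesis by (simp add: linear_conv_bounded_linear)
qed

lemma complex_linear_comp: "complex_linear L \<Longrightarrow> complex_linear M \<Longrightarrow> complex_linear (M \<circ> L)"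
  unfolding complex_linear_def by (auto intro: linear_compose)

lemma complex_linear_id: "complex_linear (\<lambda>x. x)"
  unfolding complex_linear_def by (simp add: linear_id[unfolded id_def])

lemma complex_linear_sum: "finite I \<Longrightarrow> (\<And>i. i\<in>I \<Longrightarrow> complex_linear (L i)) \<Longrightarrow> complex_linear (\<lambda>v. \<Sum>i\<in>I. L i v)"
  unfolding complex_linear_def
  by (auto intro!: linear_compose_sum simp: vec_eq_iff sum_distrib_left)

lemma complex_linear_diff: "complex_linear L \<Longrightarrow> complex_linear M \<Longrightarrow> complex_linear (\<lambda>v. L v - M v)"
  unfolding complex_linear_def
  by (auto intro!: linear_compose_sub simp: vector_ssub_ldistrib)

lemma complex_linear_scaleR: "complex_linear L \<Longrightarrow> complex_linear (\<lambda>v. a *\<^sub>R L v)"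
  unfolding complex_linear_def
  by (auto intro!: linearI simp: linear_add linear_scale scaleR_right_distrib vec_eq_iff)

lemma line_deriv:
  fixes g :: "complex^'n \<Rightarrow> complex^'n"
  assumes "(g has_derivative L) (at (z + t *s v))" "complex_linear L"
  shows "((\<lambda>t. g (z + t *s v) $ k) has_field_derivative (L v $ k)) (at t)"
proof -
  have d1: "((\<lambda>t. z + t *s v) has_derivative (\<lambda>s. s *s v)) (at t)"
  proof -
    have d0: "((\<lambda>t. t *s v) has_derivative (\<lambda>s. s *s v)) (at t)"
      by (rule bounded_linear_imp_has_derivative[OF bl_smult_line])
    show ?thesis using has_derivative_add[OF has_derivative_const[of z] d0] by simp
  qed
  have d2: "((\<lambda>t. g (z + t *s v)) has_derivative (\<lambda>s. L (s *s v))) (at t)"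
    using diff_chain_at[OF d1 assms(1)] by (simp add: o_def)
  have d3: "((\<lambda>t. g (z + t *s v) $ k) has_derivative (\<lambda>s. L (s *s v) $ k)) (at t)"
    using bounded_linear.has_derivative[OF bounded_linear_vec_nth d2] .
  have "(\<lambda>s. L (s *s v) $ k) = (\<lambda>s. (L v $ k) * s)"
  proof
    fix s
    have "L (s *s v) = s *s L v" using assms(2) unfolding complex_linear_def by blast
    then show "L (s *s v) $ k = (L v $ k) * s" by (simp add: mult.commute)
  qed
  with d3 show ?thesis by (simp add: has_field_derivative_def)
qed

lemma cauchy_dir:
  fixes g :: "complex^'n \<Rightarrow> complex^'n"
  assumes r: "r > 0"
  and hd: "\<And>w. w \<in> ball p (2*r) \<Longrightarrow> \<exists>L. complex_linear L \<and> (g has_derivative L) (at w)"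
  and hb: "\<And>w. w \<in> ball p (2*r) \<Longrightarrow> norm (g w) \<le> M"
  and z: "z \<in> ball p r" and G: "complex_linear G" "(g has_derivative G) (at z)"
  shows "norm (G v) \<le> real CARD('n) * (M / r * norm v)"
proof (cases "v = 0")
  case True
  have "linear G" using G unfolding complex_linear_def by auto
  then have "G v = 0" using True by (simp add: linear_0)
  then show ?thesis using True by simp
next
  case False
  define \<rho> where "\<rho> = r / norm v"
  have \<rho>: "\<rho> > 0" using False r by (simp add: \<rho>_def)
  have inball: "z + t *s v \<in> ball p (2*r)" if "norm t \<le> \<rho>" for t
  proof -
    have "norm (t *s v) \<le> r" using that False
      by (simp add: norm_smult_cvec \<rho>_def pos_le_divide_eq)
    moreover have "dist p z < r" using z by simp
    moreover have "dist p (z + t *s v) \<le> dist p z + dist z (z + t *s v)" by (rule dist_triangle)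
    moreover have "dist z (z + t *s v) = norm (t *s v)" by (simp add: dist_norm)
    ultimately have "dist p (z + t *s v) < 2*r" by linarith
    then show ?thesis by simp
  qed
  have comp: "norm (G v $ k) \<le> M / r * norm v" for k
  proof -
    define \<phi> where "\<phi> = (\<lambda>t. g (z + t *s v) $ k)"
    have der: "\<phi> field_differentiable at t" if t: "norm t \<le> \<rho>" for t
    proof -
      obtain L where "complex_linear L" "(g has_derivative L) (at (z + t *s v))"
        using hd[OF inball[OF t]] by blast
      from line_deriv[OF this(2,1)] show ?thesis
        unfolding \<phi>_def field_differentiable_def by blast
    qed
    have hol: "\<phi> holomorphic_on ball 0 \<rho>"
      unfolding holomorphic_on_def
      using der by (auto intro: field_differentiable_at_within)
    have cont: "continuous_on (cball 0 \<rho>) \<phi>"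
    proof (rule continuous_at_imp_continuous_on, rule ballI)
      fix x assume "x \<in> cball (0::complex) \<rho>"
      then have "norm x \<le> \<rho>" by simp
      then show "isCont \<phi> x" using der field_differentiable_imp_continuous_at by blast
    qed
    have bnd: "norm (\<phi> t) \<le> M" if "norm (0 - t) = \<rho>" for t
    proof -
      have a1: "norm (\<phi> t) \<le> norm (g (z + t *s v))" unfolding \<phi>_def by (rule Finite_Cartesian_Product.norm_nth_le)
      have "norm t \<le> \<rho>" using that by (simp add: norm_minus_commute)
      then have "norm (g (z + t *s v)) \<le> M" by (rule hb[OF inball])
      then show ?thesis using a1 by linarith
    qed
    have "norm ((deriv ^^ 1) \<phi> 0) \<le> fact 1 * M / \<rho>^1"
      by (rule Cauchy_inequality[OF hol cont \<rho> bnd])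
    moreover have "deriv \<phi> 0 = G v $ k"
      using line_deriv[of g G z 0 v k] G unfolding \<phi>_def by (auto intro: DERIV_imp_deriv)
    moreover have "fact 1 * M / \<rho>^1 = M / r * norm v" using False by (simp add: \<rho>_def)
    ultimately show ?thesis by simp
  qed
  have "norm (G v) \<le> (\<Sum>k\<in>UNIV. norm (G v $ k))" by (rule norm_le_sum_cvec)
  also have "\<dots> \<le> of_nat (card (UNIV::'n set)) * (M / r * norm v)"
    by (rule sum_bounded_above) (use comp in auto)
  finally show ?thesis by simp
qed


lemma lu_compact:
  assumes lu: "locally_uniform_limit S f g" and K: "compact K" "K \<subseteq> S" and e: "\<epsilon> > 0"
  shows "\<forall>\<^sub>F m in sequentially. \<forall>y\<in>K. dist (f m y) (g y) < \<epsilon>"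
proof -
  have "\<forall>x\<in>K. \<exists>e>0. uniform_limit (S \<inter> cball x e) f g sequentially"
    using lu K unfolding locally_uniform_limit_def by blast
  then obtain e where e0: "\<And>x. x\<in>K \<Longrightarrow> e x > 0"
    and ul: "\<And>x. x\<in>K \<Longrightarrow> uniform_limit (S \<inter> cball x (e x)) f g sequentially"
    by metis
  have cov: "K \<subseteq> (\<Union>x\<in>K. ball x (e x))" using e0 by force
  obtain K' where K': "K' \<subseteq> K" "finite K'" "K \<subseteq> (\<Union>x\<in>K'. ball x (e x))"
    using compactE_image[OF K(1) _ cov] by blast
  have "\<forall>x\<in>K'. \<forall>\<^sub>F m in sequentially. \<forall>y\<in>S \<inter> cball x (e x). dist (f m y) (g y) < \<epsilon>"
    using ul K'(1) e unfolding uniform_limit_iff by blast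
  then have "\<forall>\<^sub>F m in sequentially. \<forall>x\<in>K'. \<forall>y\<in>S \<inter> cball x (e x). dist (f m y) (g y) < \<epsilon>"
    by (rule eventually_ball_finite[OF K'(2)])
  then show ?thesis
  proof (rule eventually_mono)
    fix m assume H: "\<forall>x\<in>K'. \<forall>y\<in>S \<inter> cball x (e x). dist (f m y) (g y) < \<epsilon>"
    show "\<forall>y\<in>K. dist (f m y) (g y) < \<epsilon>"
    proof
      fix y assume y: "y \<in> K"
      then obtain x where "x \<in> K'" "y \<in> ball x (e x)" using K'(3) by blast
      then show "dist (f m y) (g y) < \<epsilon>" using H y K(2) by fastforce
    qed
  qed
qed

lemma core:
  fixes h :: "complex^'n \<Rightarrow> complex^'n" and \<Omega> \<Omega>' :: "(complex^'n) set" and D :: nat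
  assumes hol: "holo_on h \<Omega>"
  and D: "D > 0"
  and sub: "\<Omega>' \<subseteq> \<Omega>"
  and iter: "\<And>i. 1 \<le> i \<Longrightarrow> i \<le> D \<Longrightarrow> (h ^^ i) ` closure \<Omega>' \<subseteq> \<Omega>"
  and per: "\<And>x. x \<in> \<Omega>' \<Longrightarrow> (h ^^ D) x = x"
  and r: "r > 0" and cb: "cball p (4*r) \<subseteq> \<Omega>'"
  and close: "\<And>y. y \<in> cball p (3*r) \<Longrightarrow> dist (h y) y \<le> \<epsilon>"
  and eps: "\<epsilon> \<ge> 0" "real D * \<epsilon> \<le> r/4" "real CARD('n) * (real D * \<epsilon> / r) \<le> 1/2"
  shows "\<exists>B. B \<noteq> {} \<and> compact B \<and> convex B \<and> B \<subseteq> \<Omega>' \<and> h ` B = B"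
proof -
  have dist_iter: "dist ((h^^i) x) x \<le> real i * \<epsilon>" if x: "x \<in> cball p (2*r)" and "i \<le> D" for x i
    using \<open>i \<le> D\<close>
  proof (induction i)
    case 0 then show ?case by simp
  next
    case (Suc i)
    define y where "y = (h^^i) x"
    have IH: "dist y x \<le> real i * \<epsilon>" using Suc y_def by simp
    have "real i * \<epsilon> \<le> real D * \<epsilon>" using Suc eps(1) by (intro mult_right_mono) auto
    then have "dist y x \<le> r/4" using IH eps by linarith
    moreover have "dist p x \<le> 2*r" using x by simp
    moreover have "dist p y \<le> dist p x + dist x y" by (rule dist_triangle)
    moreover have "dist x y = dist y x" by (rule dist_commute)
    ultimately have "dist p y \<le> 3*r" using r by linarith
    then have "y \<in> cball p (3*r)" by simp
    then have "dist (h y) y \<le> \<epsilon>" by (rule close)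
    moreover have "dist (h y) x \<le> dist (h y) y + dist y x" by (rule dist_triangle)
    moreover have "dist ((h^^Suc i) x) x = dist (h y) x" by (simp add: y_def)
    moreover have "real (Suc i) * \<epsilon> = real i * \<epsilon> + \<epsilon>" by (simp add: algebra_simps)
    ultimately show ?case using IH by linarith
  qed
  have deriv_iter: "\<exists>L. complex_linear L \<and> ((h^^i) has_derivative L) (at z)" if z: "z \<in> \<Omega>'" and "i \<le> D" for z i
    using \<open>i \<le> D\<close>
  proof (induction i)
    case 0
    have "((\<lambda>x. x) has_derivative (\<lambda>x. x)) (at z)" by (rule has_derivative_ident)
    then show ?case using complex_linear_id by (auto simp: id_def)
  next
    case (Suc i)
    then obtain L where L: "complex_linear L" "((h^^i) has_derivative L) (at z)" by auto
    have "(h^^i) z \<in> \<Omega>"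
    proof (cases "i = 0")
      case True then show ?thesis using z sub by auto
    next
      case False
      then have "(h^^i) ` closure \<Omega>' \<subseteq> \<Omega>" using iter Suc by auto
      then show ?thesis using z closure_subset by blast
    qed
    then obtain M where M: "complex_linear M" "(h has_derivative M) (at ((h^^i) z))"
      using hol unfolding holo_on_def by blast
    have "((h \<circ> (h^^i)) has_derivative (M \<circ> L)) (at z)" by (rule diff_chain_at[OF L(2) M(2)])
    moreover have "h ^^ Suc i = h \<circ> (h^^i)" by simp
    ultimately show ?case using complex_linear_comp[OF L(1) M(1)] by metis
  qed
  define g where "g = (\<lambda>y. (1 / real D) *\<^sub>R (\<Sum>i<D. (h^^i) y) - y)"
  have gder: "\<exists>L. complex_linear L \<and> (g has_derivative L) (at z)" if z: "z \<in> \<Omega>'" for z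
  proof -
    have "\<forall>i\<in>{..<D}. \<exists>L. complex_linear L \<and> ((h^^i) has_derivative L) (at z)"
      using deriv_iter[OF z] by auto
    then obtain Lf where Lf: "\<And>i. i \<in> {..<D} \<Longrightarrow> complex_linear (Lf i) \<and> ((h^^i) has_derivative Lf i) (at z)"
      by metis
    have "(g has_derivative (\<lambda>v. (1 / real D) *\<^sub>R (\<Sum>i<D. Lf i v) - v)) (at z)"
      unfolding g_def
      by (intro has_derivative_diff has_derivative_scaleR_right has_derivative_sum has_derivative_ident)
         (use Lf in auto)
    moreover have "complex_linear (\<lambda>v. (1 / real D) *\<^sub>R (\<Sum>i<D. Lf i v) - v)"
      by (intro complex_linear_diff complex_linear_scaleR complex_linear_sum complex_linear_id)
         (use Lf in auto)
    ultimately show ?thesis by blast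
  qed
  have gbound: "norm (g w) \<le> real D * \<epsilon>" if w: "w \<in> ball p (2*r)" for w
  proof -
    have c: "(\<Sum>i<D. w) = real D *\<^sub>R w" by (metis card_lessThan sum_constant_scaleR)
    have "(1 / real D) *\<^sub>R (\<Sum>i<D. ((h^^i) w - w)) = (1 / real D) *\<^sub>R (\<Sum>i<D. (h^^i) w) - (1 / real D) *\<^sub>R (\<Sum>i<D. w)"
      by (simp only: sum_subtractf scaleR_diff_right)
    also have "(1 / real D) *\<^sub>R (\<Sum>i<D. w) = w" using D by (simp only: c scaleR_scaleR) simp
    finally have "g w = (1 / real D) *\<^sub>R (\<Sum>i<D. ((h^^i) w - w))"
      by (simp add: g_def)
    also have "norm \<dots> \<le> (1 / real D) * (\<Sum>i<D. norm ((h^^i) w - w))"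
      by (simp add: divide_right_mono norm_sum)
    also have "\<dots> \<le> (1 / real D) * (\<Sum>i<D. real D * \<epsilon>)"
    proof -
      have "norm ((h^^i) w - w) \<le> real D * \<epsilon>" if "i < D" for i
      proof -
        have "norm ((h^^i) w - w) \<le> real i * \<epsilon>"
          using dist_iter[of w i] w that by (simp add: dist_norm)
        also have "\<dots> \<le> real D * \<epsilon>" using that eps(1) by (intro mult_right_mono) auto
        finally show ?thesis .
      qed
      then show ?thesis by (intro mult_left_mono sum_mono) auto
    qed
    also have "\<dots> = real D * \<epsilon>" using D by simp
    finally show ?thesis .
  qed
  have inO: "z \<in> \<Omega>'" if "dist p z \<le> 4*r" for z using cb that by auto
  define G where "G = (\<lambda>z. SOME L. complex_linear L \<and> (g has_derivative L) (at z))"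
  have G: "complex_linear (G z) \<and> (g has_derivative G z) (at z)" if "z \<in> \<Omega>'" for z
    unfolding G_def by (rule someI_ex[OF gder[OF that]])
  have lip: "norm (g x - g y) \<le> 1/2 * norm (x - y)" if "x \<in> ball p r" "y \<in> ball p r" for x y
  proof (rule differentiable_bound[OF convex_ball _ _ that])
    fix z assume z: "z \<in> ball p r"
    then have zO: "z \<in> \<Omega>'" using r by (intro inO) simp
    show "(g has_derivative G z) (at z within ball p r)"
      using G[OF zO] by (auto intro: has_derivative_at_withinI)
    show "onorm (G z) \<le> 1/2"
    proof (rule onorm_le)
      fix v
      have "norm (G z v) \<le> real CARD('n) * (real D * \<epsilon> / r * norm v)"
      proof (rule cauchy_dir[OF r _ _ z])
        fix w assume "w \<in> ball p (2*r)"
        then have "w \<in> \<Omega>'" using r by (intro inO) simp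
        then show "\<exists>L. complex_linear L \<and> (g has_derivative L) (at w)" by (rule gder)
      next
        fix w assume "w \<in> ball p (2*r)"
        then show "norm (g w) \<le> real D * \<epsilon>" by (rule gbound)
      qed (use G[OF zO] in auto)
      also have "\<dots> = (real CARD('n) * (real D * \<epsilon> / r)) * norm v" by simp
      also have "\<dots> \<le> 1/2 * norm v" by (rule mult_right_mono[OF eps(3)]) simp
      finally show "norm (G z v) \<le> 1/2 * norm v" .
    qed
  qed
  have inv: "g x - g (h x) = h x - x" if x: "x \<in> \<Omega>'" for x
  proof -
    have s1: "(\<Sum>i<D. (h^^i) (h x)) = (\<Sum>i<D. (h^^(Suc i)) x)"
      by (simp add: funpow_Suc_right del: funpow.simps)
    have "(\<Sum>i<Suc D. (h^^i) x) = (h^^0) x + (\<Sum>i<D. (h^^(Suc i)) x)"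
      by (rule sum.lessThan_Suc_shift)
    moreover have "(\<Sum>i<Suc D. (h^^i) x) = (\<Sum>i<D. (h^^i) x) + (h^^D) x" by simp
    ultimately have "(\<Sum>i<D. (h^^(Suc i)) x) = (\<Sum>i<D. (h^^i) x)"
      using per[OF x] by simp
    with s1 show ?thesis by (simp add: g_def)
  qed
  have fix_pt: "h x = x" if x: "x \<in> ball p (r/2)" for x
  proof -
    have xc: "x \<in> cball p (3*r)" using x r by auto
    have "\<epsilon> \<le> real D * \<epsilon>" using D eps(1) by (simp add: mult_le_cancel_right1)
    then have "dist (h x) x \<le> r/4" using close[OF xc] eps by linarith
    moreover have "dist p x < r/2" using x by simp
    moreover have "dist p (h x) \<le> dist p x + dist x (h x)" by (rule dist_triangle)
    moreover have "dist x (h x) = dist (h x) x" by (rule dist_commute)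
    ultimately have "dist p (h x) < r" using r by linarith
    then have hx: "h x \<in> ball p r" by simp
    have xb: "x \<in> ball p r" using x r by auto
    have xO: "x \<in> \<Omega>'" using xb r by (intro inO) simp
    have "norm (h x - x) = norm (g x - g (h x))" using inv[OF xO] by simp
    also have "\<dots> \<le> 1/2 * norm (x - h x)" by (rule lip[OF xb hx])
    also have "\<dots> = 1/2 * norm (h x - x)" by (simp add: norm_minus_commute)
    finally have "norm (h x - x) \<le> 0" by simp
    then show ?thesis by simp
  qed
  show ?thesis
  proof (intro exI conjI)
    show "cball p (r/4) \<noteq> {}" using r by simp
    show "compact (cball p (r/4))" by simp
    show "convex (cball p (r/4))" by simp
    show "cball p (r/4) \<subseteq> \<Omega>'" using r by (auto intro: inO)
    have "\<And>x. x \<in> cball p (r/4) \<Longrightarrow> h x = x" using fix_pt r by auto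
    then show "h ` cball p (r/4) = cball p (r/4)" by simp
  qed
qed

theorem lemma3p9:
  fixes \<Omega> \<Omega>' :: "(complex ^ 'n) set"
    and f :: "nat \<Rightarrow> complex ^ 'n \<Rightarrow> complex ^ 'n"
    and D :: nat
  assumes "open \<Omega>" and "connected \<Omega>"
    and "\<And>m. holo_on (f m) \<Omega>"
    and "locally_uniform_limit \<Omega> f id"
    and "D > 0"
    and "open \<Omega>'" and "\<Omega>' \<noteq> {}" and "\<Omega>' \<subseteq> \<Omega>"
    and "compact (closure \<Omega>')" and "closure \<Omega>' \<subseteq> \<Omega>"
    and "\<And>m i. 1 \<le> i \<Longrightarrow> i \<le> D \<Longrightarrow> (f m ^^ i) ` closure \<Omega>' \<subseteq> \<Omega>"
    and "\<And>m x. x \<in> \<Omega>' \<Longrightarrow> (f m ^^ D) x = x"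
  shows "\<forall>\<^sub>F m in sequentially. \<exists>B. B \<noteq> {} \<and> compact B \<and> convex B \<and> B \<subseteq> \<Omega>' \<and> f m ` B = B"
  proof -
  obtain p where p: "p \<in> \<Omega>'" using assms(7) by blast
  obtain e where e: "e > 0" "cball p e \<subseteq> \<Omega>'" using open_contains_cball assms(6) p by blast
  define r where "r = e / 4"
  have r: "r > 0" using e by (simp add: r_def)
  have cb: "cball p (4*r) \<subseteq> \<Omega>'" using e by (simp add: r_def)
  define C where "C = real CARD('n)"
  have C: "C \<ge> 1" unfolding C_def by simp
  have Dp: "real D > 0" using assms(5) by simp
  define \<epsilon> where "\<epsilon> = r / (4 * real D * C)"
  have \<epsilon>pos: "\<epsilon> > 0" using r Dp C by (simp add: \<epsilon>_def)
  have De: "real D * \<epsilon> = r / (4 * C)" using Dp C by (simp add: \<epsilon>_def field_simps)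
  have e1: "real D * \<epsilon> \<le> r/4" unfolding De using r C
    by (simp add: divide_le_eq field_simps)
  have e2: "real CARD('n) * (real D * \<epsilon> / r) \<le> 1/2" unfolding De C_def[symmetric]
    using r C by (simp add: field_simps)
  have K: "cball p (3*r) \<subseteq> \<Omega>"
  proof -
    have "cball p (3*r) \<subseteq> cball p (4*r)" using r by (intro subset_cball) simp
    then show ?thesis using cb assms(8) by blast
  qed
  have ev: "\<forall>\<^sub>F m in sequentially. \<forall>y\<in>cball p (3*r). dist (f m y) (id y) < \<epsilon>"
    by (rule lu_compact[OF assms(4) compact_cball K \<epsilon>pos])
  then show ?thesis
  proof (rule eventually_mono)
    fix m assume H: "\<forall>y\<in>cball p (3*r). dist (f m y) (id y) < \<epsilon>"
    show "\<exists>B. B \<noteq> {} \<and> compact B \<and> convex B \<and> B \<subseteq> \<Omega>' \<and> f m ` B = B"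
      by (rule core[OF assms(3) assms(5) assms(8) assms(11) assms(12) r cb _ _ e1 e2])
         (use H \<epsilon>pos in \<open>auto simp: less_imp_le\<close>)
  qed
qed

end
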